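(* The operator $U$ is bounded from $L^1(\mu_2)$ to $L^p(\mu_2)$ for every $1\le p\le\infty$, and the operator $R$ is bounded from $L^1(\mu_2)$ to $L^q(\mu_2)$ for every $1\le q<2$. Moreover, $R$ is of weak type $(1,2)$ with respect to $\mu_2$. Here $$Uf(r)=\chi_{(1/2,\infty)}(r)\sup_{t\in[1,2],\ t<2r}\frac1r\int_{|r-t|}^{r+t}zf(z)\,dz,\qquad Rf(r)=\chi_{[0,1]}(r)\sup_{t\in[1,2],\ t\ge2r}\frac1r\int_{t-r}^{t+r}f(z)\,dz.$$
   Context: $\mu_2$ is the measure $r\,dr$ on $\mathbb{R}^+$. *)

theory Defs
  imports "HOL-Analysis.Analysis"
begin

definition mu2 :: "real measure" where
  "mu2 = density lborel (\<lambda>r. ennreal (indicator {0<..} r * r))"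

definition U_op :: "(real \<Rightarrow> real) \<Rightarrow> real \<Rightarrow> real" where
  "U_op f r = indicator {1/2<..} r *
     (SUP t\<in>{t. 1 \<le> t \<and> t \<le> 2 \<and> t < 2 * r}. (1 / r) * (LBINT z=\<bar>r - t\<bar>..r + t. z * f z))"

definition R_op :: "(real \<Rightarrow> real) \<Rightarrow> real \<Rightarrow> real" where
  "R_op f r = indicator {0..1} r *
     (SUP t\<in>{t. 1 \<le> t \<and> t \<le> 2 \<and> 2 * r \<le> t}. (1 / r) * (LBINT z=t - r..t + r. f z))"

end

theory Submission
  imports Defs
begin
lemma sets_mu2[simp, measurable_cong]: "sets mu2 = sets borel"
  by (simp add: mu2_def)
lemma space_mu2[simp]: "space mu2 = UNIV"
  by (simp add: mu2_def)
lemma meas_mu2: "borel_measurable mu2 = borel_measurable borel"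
  by (rule measurable_cong_sets) auto

lemma f_meas: "integrable mu2 f \<Longrightarrow> f \<in> borel_measurable borel"
  using borel_measurable_integrable meas_mu2 by blast

lemma g_int: assumes "integrable mu2 f"
  shows "integrable lborel (\<lambda>x. indicator {0<..} x * x * f x)"
proof -
  have [measurable]: "f \<in> borel_measurable lborel" using f_meas[OF assms] by simp
  have "integrable (density lborel (\<lambda>r. ennreal (indicator {0<..} r * r))) f"
    using assms by (simp add: mu2_def)
  then have "integrable lborel (\<lambda>x. (indicator {0<..} x * x) *\<^sub>R f x)"
    by (subst (asm) integrable_density) (auto split: split_indicator)
  then show ?thesis by simp
qed

lemma N_eq: assumes "integrable mu2 f"
  shows "(\<integral>x. \<bar>f x\<bar> \<partial>mu2) = (\<integral>x. indicator {0<..} x * x * \<bar>f x\<bar> \<partial>lborel)"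
proof -
  have [measurable]: "f \<in> borel_measurable lborel" using f_meas[OF assms] by simp
  show ?thesis unfolding mu2_def
    by (subst integral_density) (auto split: split_indicator)
qed

lemma abs_SUP_le:
  fixes h :: "real \<Rightarrow> real"
  assumes "T \<noteq> {}" "\<And>t. t \<in> T \<Longrightarrow> \<bar>h t\<bar> \<le> B"
  shows "\<bar>SUP t\<in>T. h t\<bar> \<le> B"
proof -
  obtain t0 where t0: "t0 \<in> T" using assms(1) by blast
  have bdd: "bdd_above (h ` T)" using assms(2) by (intro bdd_aboveI2[of _ _ B]) (auto simp: abs_le_iff)
  have "h t0 \<le> (SUP t\<in>T. h t)" using bdd t0 by (rule cSUP_upper2) simp
  moreover have "(SUP t\<in>T. h t) \<le> B" using assms by (intro cSUP_least) (auto simp: abs_le_iff)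
  moreover have "-B \<le> h t0" using assms(2)[OF t0] by linarith
  ultimately show ?thesis by linarith
qed

lemma less_SUP_iff':
  fixes h :: "real \<Rightarrow> real"
  assumes "T \<noteq> {}" "\<And>t. t \<in> T \<Longrightarrow> \<bar>h t\<bar> \<le> B"
  shows "c < (SUP t\<in>T. h t) \<longleftrightarrow> (\<exists>t\<in>T. c < h t)"
proof -
  have bdd: "bdd_above (h ` T)" using assms(2) by (intro bdd_aboveI2[of _ _ B]) (auto simp: abs_le_iff)
  show ?thesis using less_cSUP_iff[OF assms(1) bdd] by simp
qed

definition gg :: "(real \<Rightarrow> real) \<Rightarrow> real \<Rightarrow> real" where
  "gg f z = indicator {0<..} z * z * f z"
definition GG :: "(real \<Rightarrow> real) \<Rightarrow> real \<Rightarrow> real" where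
  "GG f z = indicator {0<..} z * z * \<bar>f z\<bar>"
definition Phi :: "(real \<Rightarrow> real) \<Rightarrow> real \<Rightarrow> real" where
  "Phi f x = integral {0..x} (gg f)"
definition KK :: "(real \<Rightarrow> real) \<Rightarrow> real \<Rightarrow> real" where
  "KK f r = (LINT z|lborel. indicator {r-2..r+2} z * GG f z)"

context
  fixes f :: "real \<Rightarrow> real"
  assumes fint: "integrable mu2 f"
begin

lemma fm: "f \<in> borel_measurable borel"
  using f_meas[OF fint] .

lemma gg_int: "integrable lborel (gg f)"
  using g_int[OF fint] unfolding gg_def by (simp add: fun_eq_iff)

lemma GG_eq: "GG f z = \<bar>gg f z\<bar>"
  by (auto simp: GG_def gg_def abs_mult split: split_indicator)

lemma GG_int: "integrable lborel (GG f)"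
  unfolding GG_eq[abs_def] using gg_int by (rule integrable_abs)

lemma GG_nonneg: "0 \<le> GG f z"
  by (simp add: GG_eq)

lemma N_GG: "(\<integral>x. \<bar>f x\<bar> \<partial>mu2) = (LINT z|lborel. GG f z)"
  using N_eq[OF fint] by (simp add: GG_def)

lemma ind_int: "integrable lborel (\<lambda>z. indicator A z * h z)" if "A \<in> sets borel" "integrable lborel h"
  for A and h :: "real \<Rightarrow> real"
  using integrable_mult_indicator[of A lborel h] that by simp

lemma LBINT_eq: fixes a b :: real assumes "0 \<le> a" "a \<le> b"
  shows "(LBINT z=a..b. z * f z) = (LINT z|lborel. indicator {a..b} z * gg f z)"
  unfolding interval_integral_Icc[OF assms(2)] set_lebesgue_integral_def
  using assms
  by (intro Bochner_Integration.integral_cong refl) (auto simp: gg_def split: split_indicator)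

lemma Icc_bound: assumes "0 \<le> a" "a \<le> b" "{a..b} \<subseteq> {c..d}"
  shows "\<bar>LINT z|lborel. indicator {a..b} z * gg f z\<bar> \<le> (LINT z|lborel. indicator {c..d} z * GG f z)"
proof -
  have "\<bar>LINT z|lborel. indicator {a..b} z * gg f z\<bar> \<le> (LINT z|lborel. norm (indicator {a..b} z * gg f z))"
    using integral_norm_bound[of lborel "\<lambda>z. indicator {a..b} z * gg f z"] by simp
  also have "\<dots> \<le> (LINT z|lborel. indicator {c..d} z * GG f z)"
    using assms(3)
    by (intro integral_mono ind_int GG_int integrable_norm gg_int)
       (auto simp: GG_eq abs_mult split: split_indicator)
  finally show ?thesis .
qed

lemma gg_integrable_on: "gg f integrable_on {a..b}"
  using set_borel_integral_eq_integral(1)[of "{a..b}" "gg f"] integrable_mult_indicator[OF _ gg_int, of "{a..b}"]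
  by (simp add: set_integrable_def)

lemma LINT_Phi: assumes "0 \<le> a" "a \<le> b"
  shows "(LINT z|lborel. indicator {a..b} z * gg f z) = Phi f b - Phi f a"
proof -
  have "(LINT z|lborel. indicator {a..b} z * gg f z) = integral {a..b} (gg f)"
    using set_borel_integral_eq_integral(2)[of "{a..b}" "gg f"] integrable_mult_indicator[OF _ gg_int, of "{a..b}"]
    by (simp add: set_integrable_def set_lebesgue_integral_def)
  also have "\<dots> = Phi f b - Phi f a"
    using Henstock_Kurzweil_Integration.integral_combine[OF assms gg_integrable_on[of 0 b]] unfolding Phi_def by simp
  finally show ?thesis .
qed

lemma Phi_cont: "continuous_on {0..n} (Phi f)"
  unfolding Phi_def by (rule indefinite_integral_continuous_1[OF gg_integrable_on])

end

definition HU :: "(real \<Rightarrow> real) \<Rightarrow> real \<Rightarrow> real \<Rightarrow> real" where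
  "HU f r t = (1 / r) * (LBINT z=\<bar>r - t\<bar>..r + t. z * f z)"

lemma U_op_HU: "U_op f r = indicator {1/2<..} r * (SUP t\<in>{t. 1 \<le> t \<and> t \<le> 2 \<and> t < 2 * r}. HU f r t)"
  unfolding U_op_def HU_def ..

context
  fixes f :: "real \<Rightarrow> real"
  assumes fint: "integrable mu2 f"
begin

lemma HU_Phi: assumes "0 \<le> r" "0 \<le> t"
  shows "HU f r t = (1/r) * (Phi f (r + t) - Phi f \<bar>r - t\<bar>)"
  unfolding HU_def using assms
  by (simp add: LBINT_eq[OF fint] LINT_Phi[OF fint])

lemma KK_nonneg: "0 \<le> KK f r"
  unfolding KK_def by (intro integral_nonneg_AE) (auto simp: GG_nonneg[OF fint])

lemma KK_le: "KK f r \<le> (LINT z|lborel. GG f z)"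
  unfolding KK_def
  by (intro integral_mono ind_int[OF fint] GG_int[OF fint])
     (auto simp: GG_nonneg[OF fint] split: split_indicator)

lemma HU_bound: assumes "0 < r" "0 \<le> t" "t \<le> 2"
  shows "\<bar>HU f r t\<bar> \<le> KK f r / r"
proof -
  have "\<bar>LBINT z=\<bar>r - t\<bar>..r + t. z * f z\<bar> \<le> KK f r"
    unfolding KK_def using assms
    by (subst LBINT_eq[OF fint]) (auto intro!: Icc_bound[OF fint])
  then show ?thesis using assms unfolding HU_def
    by (simp add: abs_mult divide_right_mono)
qed

lemma HU_cont: assumes "0 \<le> t" shows "continuous_on {0<..} (\<lambda>r. HU f r t)"
proof -
  have "{0<..} = (\<Union>n\<in>UNIV. {0<..<real n})"
    using reals_Archimedean2 by auto
  moreover have "continuous_on {0<..<real n} (\<lambda>r. HU f r t)" for n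
  proof -
    have c1: "continuous_on {0<..<real n} (\<lambda>x. Phi f (x + t))"
      by (rule continuous_on_compose2[OF Phi_cont[OF fint, of "real n + t"]])
         (intro continuous_intros, use assms in force)
    have c2: "continuous_on {0<..<real n} (\<lambda>x. Phi f \<bar>x - t\<bar>)"
      by (rule continuous_on_compose2[OF Phi_cont[OF fint, of "real n + t"]])
         (intro continuous_intros, use assms in force)
    have "continuous_on {0<..<real n} (\<lambda>r. (1/r) * (Phi f (r + t) - Phi f \<bar>r - t\<bar>))"
      by (intro continuous_intros c1 c2) auto
    then show ?thesis
      by (rule continuous_on_cong[THEN iffD1, rotated 2]) (use assms in \<open>auto simp: HU_Phi\<close>)
  qed
  ultimately show ?thesis by (metis continuous_on_open_UN open_greaterThanLessThan)
qed

lemma U_SUP_iff: assumes "1/2 < r"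
  shows "c < (SUP t\<in>{t. 1 \<le> t \<and> t \<le> 2 \<and> t < 2 * r}. HU f r t) \<longleftrightarrow>
    (\<exists>t. 1 \<le> t \<and> t \<le> 2 \<and> t < 2 * r \<and> c < HU f r t)"
proof -
  have ne: "{t. 1 \<le> t \<and> t \<le> 2 \<and> t < 2 * r} \<noteq> {}" using assms by (auto intro!: exI[of _ 1])
  show ?thesis using assms
    by (subst less_SUP_iff'[OF ne, where B="KK f r / r"]) (auto intro!: HU_bound)
qed

lemma U_bound: "\<bar>U_op f r\<bar> \<le> indicator {1/2<..} r * (KK f r / r)"
proof (cases "1/2 < r")
  case True
  have "\<bar>SUP t\<in>{t. 1 \<le> t \<and> t \<le> 2 \<and> t < 2 * r}. HU f r t\<bar> \<le> KK f r / r"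
    using True by (intro abs_SUP_le) (auto intro!: HU_bound exI[of _ 1])
  then show ?thesis using True by (simp add: U_op_HU)
qed (simp add: U_op_HU)

lemma U_meas: "U_op f \<in> borel_measurable borel"
  unfolding borel_measurable_iff_greater
proof
  fix c
  let ?A = "\<Union>t\<in>{1..2}. {max (1/2) (t/2)<..} \<inter> (\<lambda>r. HU f r t) -` {c<..}"
  let ?B = "{r::real. r \<le> 1/2 \<and> c < 0}"
  have "{w \<in> space borel. c < U_op f w} = ?A \<union> ?B"
  proof (intro equalityI subsetI)
    fix r assume "r \<in> {w \<in> space borel. c < U_op f w}"
    then have r: "c < U_op f r" by simp
    show "r \<in> ?A \<union> ?B"
    proof (cases "1/2 < r")
      case True
      then have "c < (SUP t\<in>{t. 1 \<le> t \<and> t \<le> 2 \<and> t < 2 * r}. HU f r t)"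
        using r by (simp add: U_op_HU)
      then have "\<exists>t. 1 \<le> t \<and> t \<le> 2 \<and> t < 2 * r \<and> c < HU f r t"
        using True U_SUP_iff by blast
      then show ?thesis using True by auto (metis atLeastAtMost_iff mult.commute)
    next
      case False then show ?thesis using r by (auto simp: U_op_HU)
    qed
  next
    fix r assume "r \<in> ?A \<union> ?B"
    then show "r \<in> {w \<in> space borel. c < U_op f w}"
    proof
      assume "r \<in> ?A"
      then obtain t where t: "1 \<le> t" "t \<le> 2" "1/2 < r" "t < 2 * r" "c < HU f r t"
        by auto
      have "c < (SUP t\<in>{t. 1 \<le> t \<and> t \<le> 2 \<and> t < 2 * r}. HU f r t)"
        using t U_SUP_iff by blast
      then show ?thesis using t by (simp add: U_op_HU)
    next
      assume "r \<in> ?B" then show ?thesis by (auto simp: U_op_HU)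
    qed
  qed
  moreover have "open ?A"
  proof (intro open_UN ballI)
    fix t :: real assume t: "t \<in> {1..2}"
    show "open ({max (1/2) (t/2)<..} \<inter> (\<lambda>r. HU f r t) -` {c<..})"
      by (rule continuous_open_preimage[OF continuous_on_subset[OF HU_cont]]) (use t in auto)
  qed
  moreover have "?B \<in> sets borel"
    by (cases "c < 0") auto
  ultimately show "{w \<in> space borel. c < U_op f w} \<in> sets borel" by auto
qed

end

context
  fixes f :: "real \<Rightarrow> real"
  assumes fint: "integrable mu2 f"
begin

lemma U_meas_lb: "U_op f \<in> borel_measurable lborel"
  using U_meas[OF fint] by (subst measurable_cong_sets[OF sets_lborel refl])

lemma U_meas_mu2: "U_op f \<in> borel_measurable mu2"
  using U_meas[OF fint] meas_mu2 by simp

lemma GG_meas: "GG f \<in> borel_measurable borel"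
  unfolding GG_def[abs_def] using fm[OF fint] by measurable

lemma N_nonneg: "0 \<le> (LINT z|lborel. GG f z)"
  by (intro integral_nonneg_AE) (auto simp: GG_nonneg[OF fint])

lemma U_Linf: "\<bar>U_op f r\<bar> \<le> 2 * (LINT z|lborel. GG f z)"
proof (cases "1/2 < r")
  case True
  have "KK f r / r \<le> (LINT z|lborel. GG f z) / r"
    using True KK_le[OF fint] by (simp add: divide_right_mono)
  also have "\<dots> \<le> 2 * (LINT z|lborel. GG f z)"
  proof -
    have "(LINT z|lborel. GG f z) / r \<le> (LINT z|lborel. GG f z) / (1/2)"
      by (rule divide_left_mono) (use True N_nonneg in auto)
    then show ?thesis by simp
  qed
  finally show ?thesis using U_bound[OF fint, of r] True by simp
next
  case False then show ?thesis using U_bound[OF fint, of r] N_nonneg by simp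
qed

lemma inner_KK: "(\<integral>\<^sup>+ z. ennreal (c * GG f z * indicator {..2} \<bar>z - r\<bar>) \<partial>lborel) = ennreal (c * KK f r)"
  if "0 \<le> c"
proof -
  have "(\<integral>\<^sup>+ z. ennreal (c * GG f z * indicator {..2} \<bar>z - r\<bar>) \<partial>lborel)
      = (\<integral>\<^sup>+ z. ennreal (c * (indicator {r-2..r+2} z * GG f z)) \<partial>lborel)"
    by (intro nn_integral_cong) (auto split: split_indicator simp: abs_le_iff)
  also have "\<dots> = ennreal (LINT z|lborel. c * (indicator {r-2..r+2} z * GG f z))"
    by (intro nn_integral_eq_integral integrable_mult_right ind_int[OF fint] GG_int[OF fint] AE_I2)
       (use that in \<open>auto simp: GG_nonneg[OF fint]\<close>)
  also have "\<dots> = ennreal (c * KK f r)" by (simp add: KK_def)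
  finally show ?thesis .
qed

lemma outer_KK: "(\<integral>\<^sup>+ r. ennreal (c * GG f z * indicator {..2} \<bar>z - r\<bar>) \<partial>lborel) = ennreal (c * GG f z) * 4"
  if "0 \<le> c"
proof -
  have "(\<integral>\<^sup>+ r. ennreal (c * GG f z * indicator {..2} \<bar>z - r\<bar>) \<partial>lborel)
     = (\<integral>\<^sup>+ r. ennreal (c * GG f z) * indicator {z-2..z+2} r \<partial>lborel)"
    by (intro nn_integral_cong) (auto split: split_indicator simp: abs_le_iff)
  also have "\<dots> = ennreal (c * GG f z) * 4"
    by (subst nn_integral_cmult_indicator) auto
  finally show ?thesis .
qed

lemma fubini_KK: assumes "0 \<le> c"
  shows "(\<integral>\<^sup>+ r. ennreal (c * KK f r) \<partial>lborel) = ennreal (4 * c * (LINT z|lborel. GG f z))"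
proof -
  note GG_meas[measurable]
  have m: "(\<lambda>(z, r). ennreal (c * GG f z * indicator {..2} \<bar>z - r\<bar>)) \<in> borel_measurable (lborel \<Otimes>\<^sub>M lborel)"
    by measurable
  have "(\<integral>\<^sup>+ r. ennreal (c * KK f r) \<partial>lborel)
      = (\<integral>\<^sup>+ r. (\<integral>\<^sup>+ z. ennreal (c * GG f z * indicator {..2} \<bar>z - r\<bar>) \<partial>lborel) \<partial>lborel)"
    using inner_KK[OF assms] by simp
  also have "\<dots> = (\<integral>\<^sup>+ z. (\<integral>\<^sup>+ r. ennreal (c * GG f z * indicator {..2} \<bar>z - r\<bar>) \<partial>lborel) \<partial>lborel)"
    by (rule lborel_pair.Fubini'[OF m])
  also have "\<dots> = (\<integral>\<^sup>+ z. ennreal (c * GG f z) * 4 \<partial>lborel)"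
    using outer_KK[OF assms] by simp
  also have "\<dots> = (\<integral>\<^sup>+ z. ennreal (c * GG f z) \<partial>lborel) * 4"
    by (rule nn_integral_multc) measurable
  also have "(\<integral>\<^sup>+ z. ennreal (c * GG f z) \<partial>lborel) = ennreal (LINT z|lborel. c * GG f z)"
    by (intro nn_integral_eq_integral integrable_mult_right GG_int[OF fint] AE_I2)
       (use assms in \<open>auto simp: GG_nonneg[OF fint]\<close>)
  finally have eq: "(\<integral>\<^sup>+ r. ennreal (c * KK f r) \<partial>lborel) = ennreal (LINT z|lborel. c * GG f z) * 4" .
  have "ennreal (4 * c * (LINT z|lborel. GG f z)) = ennreal (c * (LINT z|lborel. GG f z)) * ennreal 4"
    by (subst ennreal_mult[symmetric]) (auto simp: mult_ac assms N_nonneg)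
  then show ?thesis using eq by simp
qed

end

lemma powr_final: fixes N p :: real assumes "0 \<le> N" "1 \<le> p"
  shows "4 * ((2 * N) powr (p - 1)) * N \<le> (4 * N) powr p"
proof (cases "N = 0")
  case False
  then have N: "0 < N" using assms by simp
  have "(2 * N) powr (p - 1) \<le> (4 * N) powr (p - 1)"
    by (rule powr_mono2) (use N assms in auto)
  then have "4 * ((2 * N) powr (p - 1)) * N \<le> (4 * N) powr (p - 1) * (4 * N)"
    using N by (simp add: mult_ac)
  also have "\<dots> = (4 * N) powr p"
    using N powr_add[of "4*N" "p - 1" 1] by simp
  finally show ?thesis .
qed simp

lemma powr_le_cx: fixes x B p :: real assumes "0 \<le> x" "x \<le> B" "1 \<le> p"
  shows "x powr p \<le> B powr (p - 1) * x"
proof (cases "x = 0")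
  case False
  then have x: "0 < x" using assms by simp
  have "x powr p = x powr (p - 1) * x" using x powr_add[of x "p - 1" 1] by simp
  also have "\<dots> \<le> B powr (p - 1) * x"
    by (intro mult_right_mono powr_mono2) (use assms in auto)
  finally show ?thesis .
qed (use assms in simp)

context
  fixes f :: "real \<Rightarrow> real"
  assumes fint: "integrable mu2 f"
begin

lemma U_Lp: assumes p: "1 \<le> p"
  shows "integrable mu2 (\<lambda>r. \<bar>U_op f r\<bar> powr p) \<and>
    (\<integral>r. \<bar>U_op f r\<bar> powr p \<partial>mu2) \<le> (4 * (LINT z|lborel. GG f z)) powr p"
proof -
  define N where "N = (LINT z|lborel. GG f z)"
  have N0: "0 \<le> N" unfolding N_def using N_nonneg[OF fint] .
  define c where "c = (2 * N) powr (p - 1)"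
  have c0: "0 \<le> c" unfolding c_def by simp
  note U_meas_lb[OF fint, measurable] U_meas_mu2[OF fint, measurable]
  have pw: "ennreal (indicator {0<..} r * r) * ennreal (\<bar>U_op f r\<bar> powr p) \<le> ennreal (c * KK f r)" for r
  proof (cases "1/2 < r")
    case False then show ?thesis by (simp add: U_op_HU)
  next
    case True
    let ?x = "\<bar>U_op f r\<bar>"
    have x1: "?x \<le> 2 * N" using U_Linf[OF fint, of r] by (simp add: N_def)
    have "?x \<le> KK f r / r" using U_bound[OF fint, of r] True by simp
    then have x2: "r * ?x \<le> KK f r" using True by (simp add: pos_le_divide_eq mult.commute)
    have "?x powr p \<le> c * ?x" unfolding c_def using powr_le_cx[OF _ x1 p] by (simp add: mult.commute)
    then have "r * ?x powr p \<le> r * (c * ?x)" using True by simp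
    also have "\<dots> = c * (r * ?x)" by simp
    also have "\<dots> \<le> c * KK f r" using x2 c0 by (rule mult_left_mono)
    finally have "r * ?x powr p \<le> c * KK f r" .
    then show ?thesis using True by (simp add: ennreal_mult[symmetric] ennreal_leI)
  qed
  have nn: "(\<integral>\<^sup>+ r. ennreal (\<bar>U_op f r\<bar> powr p) \<partial>mu2) \<le> ennreal (4 * c * N)"
  proof -
    have "(\<integral>\<^sup>+ r. ennreal (\<bar>U_op f r\<bar> powr p) \<partial>mu2)
        = (\<integral>\<^sup>+ r. ennreal (indicator {0<..} r * r) * ennreal (\<bar>U_op f r\<bar> powr p) \<partial>lborel)"
      unfolding mu2_def by (subst nn_integral_density) auto
    also have "\<dots> \<le> (\<integral>\<^sup>+ r. ennreal (c * KK f r) \<partial>lborel)"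
      by (intro nn_integral_mono pw)
    also have "\<dots> = ennreal (4 * c * N)" unfolding N_def by (rule fubini_KK[OF fint c0])
    finally show ?thesis .
  qed
  have int: "integrable mu2 (\<lambda>r. \<bar>U_op f r\<bar> powr p)"
    by (rule integrableI_bounded) (use nn in \<open>auto simp: top_unique[symmetric] less_top intro: le_less_trans\<close>)
  have eq: "ennreal (\<integral>r. \<bar>U_op f r\<bar> powr p \<partial>mu2) = (\<integral>\<^sup>+ r. ennreal (\<bar>U_op f r\<bar> powr p) \<partial>mu2)"
    by (rule nn_integral_eq_integral[symmetric]) (use int in auto)
  have "ennreal (\<integral>r. \<bar>U_op f r\<bar> powr p \<partial>mu2) \<le> ennreal (4 * c * N)"
    unfolding eq by (rule nn)
  then have "(\<integral>r. \<bar>U_op f r\<bar> powr p \<partial>mu2) \<le> 4 * c * N"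
    using N0 c0 by (subst (asm) ennreal_le_iff) auto
  also have "\<dots> \<le> (4 * N) powr p" unfolding c_def using powr_final[OF N0 p] .
  finally show ?thesis using int by (simp add: N_def)
qed

end

definition HR :: "(real \<Rightarrow> real) \<Rightarrow> real \<Rightarrow> real \<Rightarrow> real" where
  "HR f r t = (1 / r) * (LBINT z=t - r..t + r. f z)"

lemma R_op_HR: "R_op f r = indicator {0..1} r * (SUP t\<in>{t. 1 \<le> t \<and> t \<le> 2 \<and> 2 * r \<le> t}. HR f r t)"
  unfolding R_op_def HR_def ..

definition hf :: "(real \<Rightarrow> real) \<Rightarrow> real \<Rightarrow> real" where
  "hf f z = indicator {1/2..3} z * f z"
definition Psi :: "(real \<Rightarrow> real) \<Rightarrow> real \<Rightarrow> real" where
  "Psi f x = integral {1/2..x} (hf f)"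
definition MM :: "(real \<Rightarrow> real) \<Rightarrow> real" where
  "MM f = (LINT z|lborel. indicator {1/2..3} z * \<bar>f z\<bar>)"

lemma helper_ineq: fixes x y :: real shows "1 \<le> x * 2 \<Longrightarrow> \<bar>y\<bar> \<le> 2 * (x * \<bar>y\<bar>)"
  using mult_right_mono[of 1 "x*2" "\<bar>y\<bar>"] by (simp add: mult_ac)

context
  fixes f :: "real \<Rightarrow> real"
  assumes fint: "integrable mu2 f"
begin

lemma hf_int: "integrable lborel (hf f)"
proof (rule Bochner_Integration.integrable_bound[of lborel "\<lambda>z. 2 * GG f z"])
  show "integrable lborel (\<lambda>z. 2 * GG f z)" using GG_int[OF fint] by simp
  show "hf f \<in> borel_measurable lborel" unfolding hf_def[abs_def] using fm[OF fint] by measurable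
  show "AE x in lborel. norm (hf f x) \<le> norm (2 * GG f x)"
    by (rule AE_I2) (auto simp: hf_def GG_def abs_mult split: split_indicator intro!: helper_ineq)
qed

lemma absf_int: "integrable lborel (\<lambda>z. indicator {1/2..3} z * \<bar>f z\<bar>)"
  using integrable_abs[OF hf_int] by (simp add: hf_def abs_mult)

lemma MM_le: "MM f \<le> 2 * (LINT z|lborel. GG f z)"
proof -
  have "MM f \<le> (LINT z|lborel. 2 * GG f z)"
    unfolding MM_def
    by (intro integral_mono absf_int integrable_mult_right GG_int[OF fint])
       (auto simp: GG_def split: split_indicator intro!: helper_ineq)
  then show ?thesis by simp
qed

lemma MM_nonneg: "0 \<le> MM f"
  unfolding MM_def by (intro integral_nonneg_AE) auto

lemma hf_integrable_on: "hf f integrable_on {a..b}"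
  using set_borel_integral_eq_integral(1)[of "{a..b}" "hf f"] integrable_mult_indicator[OF _ hf_int, of "{a..b}"]
  by (simp add: set_integrable_def)

lemma LBINT_hf: fixes a b :: real assumes "1/2 \<le> a" "a \<le> b" "b \<le> 3"
  shows "(LBINT z=a..b. f z) = Psi f b - Psi f a"
proof -
  have "(LBINT z=a..b. f z) = (LINT z|lborel. indicator {a..b} z * hf f z)"
    unfolding interval_integral_Icc[OF assms(2)] set_lebesgue_integral_def
    using assms by (intro Bochner_Integration.integral_cong refl) (auto simp: hf_def split: split_indicator)
  also have "\<dots> = integral {a..b} (hf f)"
    using set_borel_integral_eq_integral(2)[of "{a..b}" "hf f"] integrable_mult_indicator[OF _ hf_int, of "{a..b}"]
    by (simp add: set_integrable_def set_lebesgue_integral_def)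
  also have "\<dots> = Psi f b - Psi f a"
    using Henstock_Kurzweil_Integration.integral_combine[OF assms(1,2) hf_integrable_on[of "1/2" b]] unfolding Psi_def by simp
  finally show ?thesis .
qed

lemma LBINT_hf_bound: fixes a b :: real assumes "1/2 \<le> a" "a \<le> b" "b \<le> 3"
  shows "\<bar>LBINT z=a..b. f z\<bar> \<le> MM f"
proof -
  have "(LBINT z=a..b. f z) = (LINT z|lborel. indicator {a..b} z * f z)"
    unfolding interval_integral_Icc[OF assms(2)] set_lebesgue_integral_def by simp
  also have "\<bar>\<dots>\<bar> \<le> (LINT z|lborel. norm (indicator {a..b} z * f z))"
    using integral_norm_bound[of lborel "\<lambda>z. indicator {a..b} z * f z"] by simp
  also have "\<dots> \<le> MM f"
  proof -
    have "(\<lambda>z. indicator {a..b} z * f z) = (\<lambda>z. indicator {a..b} z * hf f z)"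
      using assms by (auto simp: hf_def fun_eq_iff split: split_indicator)
    then have "integrable lborel (\<lambda>z. indicator {a..b} z * f z)"
      using ind_int[OF fint _ hf_int, of "{a..b}"] by simp
    then show ?thesis
      unfolding MM_def using assms
      by (intro integral_mono absf_int integrable_norm) (auto simp: abs_mult split: split_indicator)
  qed
  finally show ?thesis .
qed

lemma Psi_cont: "continuous_on {1/2..3} (Psi f)"
  unfolding Psi_def by (rule indefinite_integral_continuous_1[OF hf_integrable_on])

lemma T_range: fixes r t :: real assumes "0 \<le> r" "r \<le> 1" "1 \<le> t" "t \<le> 2" "2 * r \<le> t"
  shows "1/2 \<le> t - r" "t - r \<le> t + r" "t + r \<le> 3"
  using assms by auto

lemma HR_bound: assumes "0 \<le> r" "r \<le> 1" "1 \<le> t" "t \<le> 2" "2 * r \<le> t"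
  shows "\<bar>HR f r t\<bar> \<le> MM f / r"
  using LBINT_hf_bound[OF T_range[OF assms]] assms
  by (auto simp: HR_def abs_mult divide_right_mono)

lemma R_bound: "\<bar>R_op f r\<bar> \<le> indicator {0..1} r * (MM f / r)"
proof (cases "0 \<le> r \<and> r \<le> 1")
  case True
  have "\<bar>SUP t\<in>{t. 1 \<le> t \<and> t \<le> 2 \<and> 2 * r \<le> t}. HR f r t\<bar> \<le> MM f / r"
    using True by (intro abs_SUP_le) (auto intro!: HR_bound exI[of _ 2])
  then show ?thesis using True by (simp add: R_op_HR)
qed (auto simp: R_op_HR)

end

definition tau :: "real \<Rightarrow> real \<Rightarrow> real" where
  "tau r s = max 1 (2 * r) + s * (2 - max 1 (2 * r))"

lemma tau_in: assumes "0 < r" "r < 1" "0 \<le> s" "s \<le> 1"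
  shows "1 \<le> tau r s" "tau r s \<le> 2" "2 * r \<le> tau r s"
proof -
  let ?a = "max 1 (2 * r)"
  have a: "1 \<le> ?a" "?a < 2" "2 * r \<le> ?a" using assms by auto
  have "0 \<le> s * (2 - ?a)" using a assms by simp
  moreover have "s * (2 - ?a) \<le> 2 - ?a" using a assms by (intro mult_left_le_one_le) auto
  ultimately show "1 \<le> tau r s" "tau r s \<le> 2" "2 * r \<le> tau r s" using a unfolding tau_def by linarith+
qed

lemma tau_surj: assumes "0 < r" "r < 1" "1 \<le> t" "t \<le> 2" "2 * r \<le> t"
  shows "\<exists>s\<in>{0..1}. tau r s = t"
proof -
  let ?a = "max 1 (2 * r)"
  have a: "1 \<le> ?a" "?a < 2" "?a \<le> t" using assms by auto
  let ?s = "(t - ?a) / (2 - ?a)"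
  have "0 \<le> ?s" "?s \<le> 1" using a assms by (auto simp: divide_le_eq)
  moreover have "tau r ?s = t" unfolding tau_def using a by simp
  ultimately show ?thesis by auto
qed

context
  fixes f :: "real \<Rightarrow> real"
  assumes fint: "integrable mu2 f"
begin

lemma R_SUP_iff: assumes "0 < r" "r < 1"
  shows "c < R_op f r \<longleftrightarrow> (\<exists>s\<in>{0..1}. c < HR f r (tau r s))"
proof -
  have ne: "{t. 1 \<le> t \<and> t \<le> 2 \<and> 2 * r \<le> t} \<noteq> {}" using assms by (auto intro!: exI[of _ 2])
  have "c < R_op f r \<longleftrightarrow> (\<exists>t\<in>{t. 1 \<le> t \<and> t \<le> 2 \<and> 2 * r \<le> t}. c < HR f r t)"
    using assms
    by (simp add: R_op_HR, subst less_SUP_iff'[OF ne, where B="MM f / r"]) (auto intro!: HR_bound[OF fint])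
  also have "\<dots> \<longleftrightarrow> (\<exists>s\<in>{0..1}. c < HR f r (tau r s))"
  proof
    assume "\<exists>t\<in>{t. 1 \<le> t \<and> t \<le> 2 \<and> 2 * r \<le> t}. c < HR f r t"
    then obtain t where t: "1 \<le> t" "t \<le> 2" "2 * r \<le> t" "c < HR f r t" by auto
    then show "\<exists>s\<in>{0..1}. c < HR f r (tau r s)" using tau_surj[OF assms t(1-3)] by metis
  next
    assume "\<exists>s\<in>{0..1}. c < HR f r (tau r s)"
    then obtain s where s: "0 \<le> s" "s \<le> 1" "c < HR f r (tau r s)" by auto
    then show "\<exists>t\<in>{t. 1 \<le> t \<and> t \<le> 2 \<and> 2 * r \<le> t}. c < HR f r t"
      using tau_in[OF assms s(1,2)] by auto
  qed
  finally show ?thesis .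
qed

lemma HR_cont: assumes "0 \<le> s" "s \<le> 1"
  shows "continuous_on {0<..<1} (\<lambda>r. HR f r (tau r s))"
proof -
  have rng: "1/2 \<le> tau r s - r" "tau r s - r \<le> tau r s + r" "tau r s + r \<le> 3" if "r \<in> {0<..<1}" for r
    using T_range[OF fint, of r "tau r s"] tau_in[of r s] that assms by auto
  have ct: "continuous_on {0<..<1} (\<lambda>r. tau r s)"
    unfolding tau_def by (intro continuous_intros)
  have c1: "continuous_on {0<..<1} (\<lambda>r. Psi f (tau r s + r))"
    by (rule continuous_on_compose2[OF Psi_cont[OF fint]])
       (intro continuous_intros ct, use rng in fastforce)
  have c2: "continuous_on {0<..<1} (\<lambda>r. Psi f (tau r s - r))"
    by (rule continuous_on_compose2[OF Psi_cont[OF fint]])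
       (intro continuous_intros ct, use rng in fastforce)
  have "continuous_on {0<..<1} (\<lambda>r. (1/r) * (Psi f (tau r s + r) - Psi f (tau r s - r)))"
    by (intro continuous_intros c1 c2) auto
  then show ?thesis
    by (rule continuous_on_cong[THEN iffD1, rotated 2])
       (use rng in \<open>auto simp: HR_def LBINT_hf[OF fint]\<close>)
qed

lemma R_meas: "R_op f \<in> borel_measurable borel"
  unfolding borel_measurable_iff_greater
proof
  fix c
  let ?A = "\<Union>s\<in>{0..1}. {0<..<1} \<inter> (\<lambda>r. HR f r (tau r s)) -` {c<..}"
  let ?B = "{0::real, 1} \<inter> {r. c < R_op f r}"
  let ?C = "{r::real. (r < 0 \<or> 1 < r) \<and> c < 0}"
  have eq: "{w \<in> space borel. c < R_op f w} = ?A \<union> ?B \<union> ?C"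
  proof (intro equalityI subsetI)
    fix r assume "r \<in> {w \<in> space borel. c < R_op f w}"
    then have r: "c < R_op f r" by simp
    show "r \<in> ?A \<union> ?B \<union> ?C"
    proof (cases "0 < r \<and> r < 1")
      case True then show ?thesis using r R_SUP_iff[of r c] by auto
    next
      case False then show ?thesis using r by (auto simp: R_op_HR)
    qed
  next
    fix r assume "r \<in> ?A \<union> ?B \<union> ?C"
    then show "r \<in> {w \<in> space borel. c < R_op f w}"
      using R_SUP_iff[of r c] by (auto simp: R_op_HR)
  qed
  have "open ?A"
  proof (intro open_UN ballI)
    fix s :: real assume s: "s \<in> {0..1}"
    show "open ({0<..<1} \<inter> (\<lambda>r. HR f r (tau r s)) -` {c<..})"
      by (rule continuous_open_preimage[OF HR_cont]) (use s in auto)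
  qed
  then have A: "?A \<in> sets borel" by (rule borel_open)
  have B: "?B \<in> sets borel"
    by (rule borel_closed, rule finite_imp_closed) auto
  have C: "?C \<in> sets borel"
    by (cases "c < 0") auto
  show "{w \<in> space borel. c < R_op f w} \<in> sets borel"
    by (simp only: eq) (intro sets.Un A B C)
qed

end

lemma int_powr01: assumes "q < 2"
  shows "(\<integral>\<^sup>+ r. ennreal (indicator {0..1} r * r powr (1 - q)) \<partial>lborel) = ennreal (1 / (2 - q))"
proof -
  have "((\<lambda>x. x powr (1 - q)) has_integral (1 powr (1 - q + 1) / (1 - q + 1))) {0..1::real}"
    by (rule has_integral_powr_from_0) (use assms in auto)
  then have "((\<lambda>x. x powr (1 - q)) has_integral (1 / (2 - q))) {0..1::real}" by simp
  from nn_integral_has_integral_lebesgue[where f="\<lambda>x. x powr (1 - q)", OF _ this]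
  show ?thesis by simp
qed

context
  fixes f :: "real \<Rightarrow> real"
  assumes fint: "integrable mu2 f"
begin

lemma R_meas_mu2: "R_op f \<in> borel_measurable mu2"
  using R_meas[OF fint] meas_mu2 by simp

lemma R_Lq: assumes q: "1 \<le> q" "q < 2"
  shows "integrable mu2 (\<lambda>r. \<bar>R_op f r\<bar> powr q) \<and>
    (\<integral>r. \<bar>R_op f r\<bar> powr q \<partial>mu2) \<le> (MM f) powr q * (1 / (2 - q))"
proof -
  define M where "M = MM f"
  have M0: "0 \<le> M" unfolding M_def using MM_nonneg[OF fint] .
  have Rl[measurable]: "R_op f \<in> borel_measurable lborel"
    using R_meas[OF fint] by (subst measurable_cong_sets[OF sets_lborel refl])
  note R_meas_mu2[measurable]
  have pw: "ennreal (indicator {0<..} r * r) * ennreal (\<bar>R_op f r\<bar> powr q)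
      \<le> ennreal (M powr q) * ennreal (indicator {0..1} r * r powr (1 - q))" for r
  proof (cases "0 < r \<and> r \<le> 1")
    case True
    have "\<bar>R_op f r\<bar> \<le> M / r" using R_bound[OF fint, of r] True by (simp add: M_def)
    then have "\<bar>R_op f r\<bar> powr q \<le> (M / r) powr q" by (intro powr_mono2) (use q in auto)
    then have "r * \<bar>R_op f r\<bar> powr q \<le> r * (M / r) powr q" using True by simp
    also have "\<dots> = M powr q * (r powr 1 / r powr q)" using True by (simp add: powr_divide)
    also have "\<dots> = M powr q * r powr (1 - q)" by (simp add: powr_diff)
    finally show ?thesis using True
      by (simp add: ennreal_mult[symmetric] ennreal_leI)
  next
    case False
    then consider "r \<le> 0" | "1 < r" by linarith
    then show ?thesis
    proof cases
      case 2 then have "R_op f r = 0" using R_bound[OF fint, of r] by simp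
      then show ?thesis by simp
    qed simp
  qed
  have nn: "(\<integral>\<^sup>+ r. ennreal (\<bar>R_op f r\<bar> powr q) \<partial>mu2) \<le> ennreal (M powr q * (1 / (2 - q)))"
  proof -
    have "(\<integral>\<^sup>+ r. ennreal (\<bar>R_op f r\<bar> powr q) \<partial>mu2)
        = (\<integral>\<^sup>+ r. ennreal (indicator {0<..} r * r) * ennreal (\<bar>R_op f r\<bar> powr q) \<partial>lborel)"
      unfolding mu2_def by (subst nn_integral_density) auto
    also have "\<dots> \<le> (\<integral>\<^sup>+ r. ennreal (M powr q) * ennreal (indicator {0..1} r * r powr (1 - q)) \<partial>lborel)"
      by (intro nn_integral_mono pw)
    also have "\<dots> = ennreal (M powr q) * ennreal (1 / (2 - q))"
      by (subst nn_integral_cmult) (auto simp: int_powr01[OF q(2)])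
    also have "\<dots> = ennreal (M powr q * (1 / (2 - q)))"
      using q by (subst ennreal_mult[symmetric]) auto
    finally show ?thesis .
  qed
  have int: "integrable mu2 (\<lambda>r. \<bar>R_op f r\<bar> powr q)"
    by (rule integrableI_bounded) (use nn in \<open>auto simp: top_unique[symmetric] less_top intro: le_less_trans\<close>)
  have eq: "ennreal (\<integral>r. \<bar>R_op f r\<bar> powr q \<partial>mu2) = (\<integral>\<^sup>+ r. ennreal (\<bar>R_op f r\<bar> powr q) \<partial>mu2)"
    by (rule nn_integral_eq_integral[symmetric]) (use int in auto)
  have "ennreal (\<integral>r. \<bar>R_op f r\<bar> powr q \<partial>mu2) \<le> ennreal (M powr q * (1 / (2 - q)))"
    unfolding eq by (rule nn)
  then have "(\<integral>r. \<bar>R_op f r\<bar> powr q \<partial>mu2) \<le> M powr q * (1 / (2 - q))"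
    using q by (subst (asm) ennreal_le_iff) auto
  then show ?thesis using int by (simp add: M_def)
qed

lemma R_weak: assumes s: "0 < s"
  shows "emeasure mu2 {r \<in> space mu2. s < \<bar>R_op f r\<bar>} \<le> ennreal ((MM f / s) ^ 2)"
proof -
  define a where "a = MM f / s"
  have a0: "0 \<le> a" unfolding a_def using MM_nonneg[OF fint] s by simp
  have sub: "{r \<in> space mu2. s < \<bar>R_op f r\<bar>} \<subseteq> {0..a}"
  proof
    fix r assume "r \<in> {r \<in> space mu2. s < \<bar>R_op f r\<bar>}"
    then have r: "s < \<bar>R_op f r\<bar>" by simp
    have b: "\<bar>R_op f r\<bar> \<le> indicator {0..1} r * (MM f / r)" by (rule R_bound[OF fint])
    have "r \<in> {0..1}"
    proof (rule ccontr)
      assume "r \<notin> {0..1}"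
      then have "\<bar>R_op f r\<bar> \<le> 0" using b by simp
      then show False using r s by simp
    qed
    moreover have "r \<noteq> 0" using r b s by auto
    ultimately have r0: "0 < r" by auto
    then have "s < MM f / r" using r b \<open>r \<in> {0..1}\<close> by simp
    then have "s * r < MM f" using r0 by (simp add: less_divide_eq)
    then have "r < a" unfolding a_def using s by (simp add: less_divide_eq mult.commute)
    then show "r \<in> {0..a}" using r0 by simp
  qed
  have "emeasure mu2 {r \<in> space mu2. s < \<bar>R_op f r\<bar>} \<le> emeasure mu2 {0..a}"
    by (rule emeasure_mono[OF sub]) simp
  also have "\<dots> = (\<integral>\<^sup>+ x. ennreal (indicator {0<..} x * x) * indicator {0..a} x \<partial>lborel)"
    unfolding mu2_def by (subst emeasure_density) auto
  also have "\<dots> \<le> (\<integral>\<^sup>+ x. ennreal a * indicator {0..a} x \<partial>lborel)"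
    by (intro nn_integral_mono) (auto split: split_indicator intro!: ennreal_leI)
  also have "\<dots> = ennreal a * ennreal a"
    using a0 by (subst nn_integral_cmult_indicator) auto
  also have "\<dots> = ennreal ((MM f / s) ^ 2)"
    using a0 by (simp add: a_def ennreal_mult[symmetric] power2_eq_square)
  finally show ?thesis .
qed

end

lemma powr_inv_le: fixes I X q :: real
  assumes "0 \<le> I" "0 \<le> X" "I \<le> X powr q" "0 < q"
  shows "I powr (1 / q) \<le> X"
proof -
  have "I powr (1 / q) \<le> (X powr q) powr (1 / q)"
    by (rule powr_mono2) (use assms in auto)
  also have "\<dots> = X" using assms by (simp add: powr_powr)
  finally show ?thesis .
qed

theorem lemma3p2:
  shows
   "(\<forall>p::real. 1 \<le> p \<longrightarrow> (\<exists>C. \<forall>f. integrable mu2 f \<longrightarrow>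
        U_op f \<in> borel_measurable mu2 \<and>
        integrable mu2 (\<lambda>r. \<bar>U_op f r\<bar> powr p) \<and>
        (\<integral>r. \<bar>U_op f r\<bar> powr p \<partial>mu2) powr (1 / p) \<le> C * (\<integral>r. \<bar>f r\<bar> \<partial>mu2)))
    \<and> (\<exists>C. \<forall>f. integrable mu2 f \<longrightarrow>
        U_op f \<in> borel_measurable mu2 \<and>
        (AE r in mu2. \<bar>U_op f r\<bar> \<le> C * (\<integral>r. \<bar>f r\<bar> \<partial>mu2)))
    \<and> (\<forall>q::real. 1 \<le> q \<and> q < 2 \<longrightarrow> (\<exists>C. \<forall>f. integrable mu2 f \<longrightarrow>
        R_op f \<in> borel_measurable mu2 \<and>
        integrable mu2 (\<lambda>r. \<bar>R_op f r\<bar> powr q) \<and>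
        (\<integral>r. \<bar>R_op f r\<bar> powr q \<partial>mu2) powr (1 / q) \<le> C * (\<integral>r. \<bar>f r\<bar> \<partial>mu2)))
    \<and> (\<exists>C. \<forall>f. integrable mu2 f \<longrightarrow>
        R_op f \<in> borel_measurable mu2 \<and>
        (\<forall>s>0. emeasure mu2 {r \<in> space mu2. s < \<bar>R_op f r\<bar>}
                 \<le> ennreal ((C * (\<integral>r. \<bar>f r\<bar> \<partial>mu2) / s) ^ 2)))"
proof (intro conjI allI impI)
  fix p :: real assume p: "1 \<le> p"
  show "\<exists>C. \<forall>f. integrable mu2 f \<longrightarrow>
        U_op f \<in> borel_measurable mu2 \<and>
        integrable mu2 (\<lambda>r. \<bar>U_op f r\<bar> powr p) \<and>
        (\<integral>r. \<bar>U_op f r\<bar> powr p \<partial>mu2) powr (1 / p) \<le> C * (\<integral>r. \<bar>f r\<bar> \<partial>mu2)"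
  proof (intro exI[of _ 4] allI impI conjI)
    fix f :: "real \<Rightarrow> real" assume fi: "integrable mu2 f"
    show "U_op f \<in> borel_measurable mu2" by (rule U_meas_mu2[OF fi])
    show "integrable mu2 (\<lambda>r. \<bar>U_op f r\<bar> powr p)" using U_Lp[OF fi p] by simp
    show "(\<integral>r. \<bar>U_op f r\<bar> powr p \<partial>mu2) powr (1 / p) \<le> 4 * (\<integral>r. \<bar>f r\<bar> \<partial>mu2)"
      unfolding N_GG[OF fi]
      by (rule powr_inv_le) (use U_Lp[OF fi p] N_nonneg[OF fi] p in auto)
  qed
next
  show "\<exists>C. \<forall>f. integrable mu2 f \<longrightarrow>
        U_op f \<in> borel_measurable mu2 \<and>
        (AE r in mu2. \<bar>U_op f r\<bar> \<le> C * (\<integral>r. \<bar>f r\<bar> \<partial>mu2))"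
    by (intro exI[of _ 2] allI impI conjI U_meas_mu2 AE_I2)
       (auto simp: N_GG intro: U_Linf)
next
  fix q :: real assume q: "1 \<le> q \<and> q < 2"
  define k where "k = (1 / (2 - q)) powr (1 / q)"
  show "\<exists>C. \<forall>f. integrable mu2 f \<longrightarrow>
        R_op f \<in> borel_measurable mu2 \<and>
        integrable mu2 (\<lambda>r. \<bar>R_op f r\<bar> powr q) \<and>
        (\<integral>r. \<bar>R_op f r\<bar> powr q \<partial>mu2) powr (1 / q) \<le> C * (\<integral>r. \<bar>f r\<bar> \<partial>mu2)"
  proof (intro exI[of _ "2 * k"] allI impI conjI)
    fix f :: "real \<Rightarrow> real" assume fi: "integrable mu2 f"
    define N where "N = (LINT z|lborel. GG f z)"
    have N0: "0 \<le> N" unfolding N_def by (rule N_nonneg[OF fi])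
    show "R_op f \<in> borel_measurable mu2" by (rule R_meas_mu2[OF fi])
    show "integrable mu2 (\<lambda>r. \<bar>R_op f r\<bar> powr q)" using R_Lq[OF fi] q by simp
    have "(\<integral>r. \<bar>R_op f r\<bar> powr q \<partial>mu2) \<le> (MM f) powr q * (1 / (2 - q))"
      using R_Lq[OF fi] q by simp
    also have "\<dots> \<le> (2 * N) powr q * (1 / (2 - q))"
      using q MM_le[OF fi] MM_nonneg[OF fi] unfolding N_def
      by (intro mult_right_mono powr_mono2) auto
    also have "\<dots> = (2 * N * k) powr q"
      using q by (simp add: k_def powr_mult powr_powr)
    finally have le: "(\<integral>r. \<bar>R_op f r\<bar> powr q \<partial>mu2) \<le> (2 * N * k) powr q" .
    show "(\<integral>r. \<bar>R_op f r\<bar> powr q \<partial>mu2) powr (1 / q) \<le> 2 * k * (\<integral>r. \<bar>f r\<bar> \<partial>mu2)"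
      using powr_inv_le[OF _ _ le] q N0
      by (simp add: N_GG[OF fi] N_def k_def mult_ac integral_nonneg_AE)
  qed
next
  show "\<exists>C. \<forall>f. integrable mu2 f \<longrightarrow>
        R_op f \<in> borel_measurable mu2 \<and>
        (\<forall>s>0. emeasure mu2 {r \<in> space mu2. s < \<bar>R_op f r\<bar>}
                 \<le> ennreal ((C * (\<integral>r. \<bar>f r\<bar> \<partial>mu2) / s) ^ 2))"
  proof (intro exI[of _ 2] allI impI conjI)
    show "R_op f \<in> borel_measurable mu2" if "integrable mu2 f" for f :: "real \<Rightarrow> real"
      by (rule R_meas_mu2[OF that])
  next
    fix f :: "real \<Rightarrow> real" and s :: real assume fi: "integrable mu2 f" and s: "0 < s"
    have "(MM f / s) ^ 2 \<le> (2 * (\<integral>r. \<bar>f r\<bar> \<partial>mu2) / s) ^ 2"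
      unfolding N_GG[OF fi]
      using MM_le[OF fi] MM_nonneg[OF fi] s
      by (intro power_mono divide_right_mono) auto
    then show "emeasure mu2 {r \<in> space mu2. s < \<bar>R_op f r\<bar>}
                 \<le> ennreal ((2 * (\<integral>r. \<bar>f r\<bar> \<partial>mu2) / s) ^ 2)"
      using R_weak[OF fi s] by (meson ennreal_leI order_trans)
  qed
qed

end
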